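(* Let $L>0$, let $n$ be a positive integer, $\Delta x = 2L/n$, and let $X_n=\{x_0,\dots,x_{n-1}\}$ with $x_i=-L+i\Delta x$. Let $k\ge 1$ and let $\omega_1,\dots,\omega_k$ be discrete measures on $\mathbb{R}$ of the form $\omega_\ell=\sum_i a_i^\ell\,\delta_{s_i^\ell}$ (finitely many atoms) with $a_i^\ell\ge 0$ and $-L\le s_i^\ell\le L-\Delta x$ for all $i,\ell$. Fix a constant $C\in[0,1]$ and define, for $\varepsilon>0$, $$\delta(\varepsilon)=C+\int_\varepsilon^\infty (1-e^{\varepsilon-s})\,(\omega_1*\cdots*\omega_k)(s)\,ds .$$ For each $\ell$ let $\omega_\ell^{\mathrm L}=\sum_i a_i^\ell\,\delta_{s_i^{\mathrm L,\ell}}$ and $\omega_\ell^{\mathrm R}=\sum_i a_i^\ell\,\delta_{s_i^{\mathrm R,\ell}}$, where $s_i^{\mathrm L,\ell}=\max\{x\in X_n: x\le s_i^\ell\}$ and $s_i^{\mathrm R,\ell}=\min\{x\in X_n: x\ge s_i^\ell\}$, and let $\delta^{\mathrm L}(\varepsilon)$, $\delta^{\mathrm R}(\varepsilon)$ be defined by the same formula (with the same constant $C$) with $\omega_\ell$ replaced by $\omega_\ell^{\mathrm L}$, resp. $\omega_\ell^{\mathrm R}$. Then for all $\varepsilon>0$, $$\delta^{\mathrm L}(\varepsilon)\le\delta(\varepsilon)\le\delta^{\mathrm R}(\varepsilon).$$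
   Context: $\delta_t$ denotes the Dirac point mass at $t$. The convolution of discrete measures is $\big(\sum_i a_i\delta_{t_i}\big)*\big(\sum_j b_j\delta_{u_j}\big)=\sum_{i,j}a_ib_j\,\delta_{t_i+u_j}$, and $\int_\varepsilon^\infty h(s)\,\mu(s)\,ds$ for a discrete measure $\mu=\sum_i c_i\delta_{t_i}$ means $\sum_{i:\,t_i\ge\varepsilon} c_i h(t_i)$. In the paper, $C=1-\prod_{\ell}(1-\delta_\ell(\infty))$ is the contribution of outcomes with infinite privacy loss, which is unaffected by the grid approximation. *)

theory Defs
  imports "HOL-Analysis.Analysis"
begin

text \<open>A discrete measure with finitely many atoms sum_i a_i delta_(s_i) is represented by
  the list of pairs (a_i, s_i).\<close>
type_synonym dmeasure = "(real \<times> real) list"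

definition dconv :: "dmeasure \<Rightarrow> dmeasure \<Rightarrow> dmeasure" where
  "dconv xs ys = [(a * b, t + u). (a, t) \<leftarrow> xs, (b, u) \<leftarrow> ys]"

definition dconv_all :: "dmeasure list \<Rightarrow> dmeasure" where
  "dconv_all ws = foldr dconv ws [(1, 0)]"

text \<open>delta(eps) = C + int_eps^infty (1 - e^(eps - s)) (omega_1 * ... * omega_k)(s) ds,
  the integral against a discrete measure being the sum over atoms t with t >= eps.\<close>
definition delta_fun :: "real \<Rightarrow> dmeasure list \<Rightarrow> real \<Rightarrow> real" where
  "delta_fun C ws \<epsilon> = C + sum_list [c * (1 - exp (\<epsilon> - t)). (c, t) \<leftarrow> dconv_all ws, \<epsilon> \<le> t]"

definition grid :: "real \<Rightarrow> nat \<Rightarrow> real set" where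
  "grid L n = {-L + real i * (2 * L / real n) | i. i < n}"

definition round_down :: "real \<Rightarrow> nat \<Rightarrow> real \<Rightarrow> real" where
  "round_down L n s = Max {x \<in> grid L n. x \<le> s}"

definition round_up :: "real \<Rightarrow> nat \<Rightarrow> real \<Rightarrow> real" where
  "round_up L n s = Min {x \<in> grid L n. s \<le> x}"

definition discretize_L :: "real \<Rightarrow> nat \<Rightarrow> dmeasure \<Rightarrow> dmeasure" where
  "discretize_L L n w = map (\<lambda>(a, s). (a, round_down L n s)) w"

definition discretize_R :: "real \<Rightarrow> nat \<Rightarrow> dmeasure \<Rightarrow> dmeasure" where
  "discretize_R L n w = map (\<lambda>(a, s). (a, round_up L n s)) w"

end

theory Submission
  imports Defs
begin

definition RR :: "real \<times> real \<Rightarrow> real \<times> real \<Rightarrow> bool" where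
  "RR p q = (fst p = fst q \<and> 0 \<le> fst p \<and> snd p \<le> snd q)"

lemma sum_form:
  "sum_list [c * (1 - exp (\<epsilon> - t)). (c, t) \<leftarrow> xs, \<epsilon> \<le> t]
   = sum_list (map (\<lambda>(c,t). if \<epsilon> \<le> t then c * (1 - exp (\<epsilon> - t)) else 0) xs)"
  by (induction xs) auto

lemma g_mono:
  assumes "RR p q"
  shows "(\<lambda>(c,t). if \<epsilon> \<le> t then c * (1 - exp (\<epsilon> - t)) else (0::real)) p
       \<le> (\<lambda>(c,t). if \<epsilon> \<le> t then c * (1 - exp (\<epsilon> - t)) else 0) q"
proof -
  obtain a s b t where p: "p = (a,s)" and q: "q = (b,t)" by fastforce
  have ab: "a = b" "0 \<le> a" "s \<le> t" using assms by (auto simp: RR_def p q)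
  show ?thesis
  proof (cases "\<epsilon> \<le> s")
    case True
    then have "exp (\<epsilon> - t) \<le> exp (\<epsilon> - s)" using ab by simp
    then have "a * (1 - exp (\<epsilon> - s)) \<le> a * (1 - exp (\<epsilon> - t))"
      using ab by (intro mult_left_mono) auto
    then show ?thesis using True ab by (simp add: p q)
  next
    case False
    show ?thesis
    proof (cases "\<epsilon> \<le> t")
      case True
      then have "exp (\<epsilon> - t) \<le> 1" by simp
      then show ?thesis using False True ab by (simp add: p q)
    qed (use False in \<open>simp add: p q\<close>)
  qed
qed

lemma sum_mono_rel:
  assumes "list_all2 RR xs ys"
  shows "sum_list (map (\<lambda>(c,t). if \<epsilon> \<le> t then c * (1 - exp (\<epsilon> - t)) else (0::real)) xs)
       \<le> sum_list (map (\<lambda>(c,t). if \<epsilon> \<le> t then c * (1 - exp (\<epsilon> - t)) else 0) ys)"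
  using assms
proof (induction rule: list_all2_induct)
  case Nil then show ?case by simp
next
  case (Cons x xs y ys)
  show ?case using g_mono[OF Cons(1), of \<epsilon>] Cons(3) by simp
qed

lemma dconv_rel_inner:
  assumes "RR p q" "list_all2 RR ys ys'"
  shows "list_all2 RR ((map (\<lambda>(b, u). (fst p * b, snd p + u)) ys))
                      ((map (\<lambda>(b, u). (fst q * b, snd q + u)) ys'))"
  using assms(2)
proof (induction rule: list_all2_induct)
  case Nil then show ?case by simp
next
  case (Cons x xs y ys)
  then show ?case using assms(1)
    by (cases x; cases y; cases p; cases q) (auto simp: RR_def)
qed

lemma dconv_rel:
  assumes "list_all2 RR xs xs'" "list_all2 RR ys ys'"
  shows "list_all2 RR (dconv xs ys) (dconv xs' ys')"
  using assms(1)
proof (induction rule: list_all2_induct)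
  case Nil then show ?case by (simp add: dconv_def)
next
  case (Cons x xs y ys2)
  have h: "list_all2 RR ((map (\<lambda>(b, u). (fst x * b, snd x + u)) ys))
                      ((map (\<lambda>(b, u). (fst y * b, snd y + u)) ys'))"
    by (rule dconv_rel_inner[OF Cons(1) assms(2)])
  have e1: "dconv (x # xs) ys = (map (\<lambda>(b, u). (fst x * b, snd x + u)) ys) @ dconv xs ys"
    by (cases x) (simp add: dconv_def)
  have e2: "dconv (y # ys2) ys' = (map (\<lambda>(b, u). (fst y * b, snd y + u)) ys') @ dconv ys2 ys'"
    by (cases y) (simp add: dconv_def)
  show ?case unfolding e1 e2 by (rule list_all2_appendI[OF h Cons(3)])
qed

lemma dconv_all_rel:
  assumes "list_all2 (list_all2 RR) ws vs"
  shows "list_all2 RR (dconv_all ws) (dconv_all vs)"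
  using assms
proof (induction rule: list_all2_induct)
  case Nil then show ?case by (simp add: dconv_all_def RR_def)
next
  case (Cons x xs y ys)
  then show ?case using dconv_rel by (simp add: dconv_all_def)
qed

lemma delta_mono:
  assumes "list_all2 (list_all2 RR) ws vs"
  shows "delta_fun C ws \<epsilon> \<le> delta_fun C vs \<epsilon>"
  unfolding delta_fun_def sum_form
  using sum_mono_rel[OF dconv_all_rel[OF assms]] by simp

lemma grid_facts:
  assumes "L > 0" "n > 0" "-L \<le> s" "s \<le> L - 2 * L / real n"
  shows "round_down L n s \<le> s" "s \<le> round_up L n s"
proof -
  have fin: "finite (grid L n)"
  proof -
    have "grid L n = (\<lambda>i. -L + real i * (2 * L / real n)) ` {..<n}"
      unfolding grid_def by auto
    then show ?thesis by simp
  qed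
  have m: "-L \<in> grid L n" unfolding grid_def using assms(2) by force
  have "real (n - 1) = real n - 1" using assms(2) by simp
  then have "-L + real (n - 1) * (2 * L / real n) = L - 2 * L / real n"
    using assms(2) by (simp add: field_simps)
  then have M: "L - 2 * L / real n \<in> grid L n" unfolding grid_def using assms(2)
    by (metis (mono_tags, lifting) diff_less less_numeral_extra(1) mem_Collect_eq)
  have f1: "finite {x \<in> grid L n. x \<le> s}" using fin by simp
  have n1: "-L \<in> {x \<in> grid L n. x \<le> s}" using m assms by simp
  show "round_down L n s \<le> s" unfolding round_down_def
    using Max_in[OF f1] n1 by auto
  have f2: "finite {x \<in> grid L n. s \<le> x}" using fin by simp
  have n2: "L - 2 * L / real n \<in> {x \<in> grid L n. s \<le> x}" using M assms by simp
  show "s \<le> round_up L n s" unfolding round_up_def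
    using Min_in[OF f2] n2 by auto
qed

theorem lemma5:
  fixes L C \<epsilon> :: real and n :: nat and ws :: "dmeasure list"
  assumes "L > 0" and "n > 0"
    and "length ws \<ge> 1"
    and "\<forall>w \<in> set ws. \<forall>(a, s) \<in> set w. a \<ge> 0 \<and> -L \<le> s \<and> s \<le> L - 2 * L / real n"
    and "0 \<le> C" and "C \<le> 1"
    and "\<epsilon> > 0"
  shows "delta_fun C (map (discretize_L L n) ws) \<epsilon> \<le> delta_fun C ws \<epsilon>
       \<and> delta_fun C ws \<epsilon> \<le> delta_fun C (map (discretize_R L n) ws) \<epsilon>"
proof
  have "list_all2 (list_all2 RR) (map (discretize_L L n) ws) ws"
    unfolding list_all2_map1 list_all2_same
  proof
    fix w assume w: "w \<in> set ws"
    show "list_all2 RR (discretize_L L n w) w"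
      unfolding discretize_L_def list_all2_map1 list_all2_same
    proof
      fix p assume p: "p \<in> set w"
      obtain a s where ps: "p = (a,s)" by fastforce
      have "a \<ge> 0 \<and> -L \<le> s \<and> s \<le> L - 2 * L / real n" using assms(4) w p ps by fastforce
      then show "RR ((\<lambda>(a, s). (a, round_down L n s)) p) p"
        using grid_facts(1)[OF assms(1,2)] by (simp add: ps RR_def)
    qed
  qed
  then show "delta_fun C (map (discretize_L L n) ws) \<epsilon> \<le> delta_fun C ws \<epsilon>"
    by (rule delta_mono)
next
  have "list_all2 (list_all2 RR) ws (map (discretize_R L n) ws)"
    unfolding list_all2_map2 list_all2_same
  proof
    fix w assume w: "w \<in> set ws"
    show "list_all2 RR w (discretize_R L n w)"
      unfolding discretize_R_def list_all2_map2 list_all2_same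
    proof
      fix p assume p: "p \<in> set w"
      obtain a s where ps: "p = (a,s)" by fastforce
      have "a \<ge> 0 \<and> -L \<le> s \<and> s \<le> L - 2 * L / real n" using assms(4) w p ps by fastforce
      then show "RR p ((\<lambda>(a, s). (a, round_up L n s)) p)"
        using grid_facts(2)[OF assms(1,2)] by (simp add: ps RR_def)
    qed
  qed
  then show "delta_fun C ws \<epsilon> \<le> delta_fun C (map (discretize_R L n) ws) \<epsilon>"
    by (rule delta_mono)
qed

end
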